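(* Let $N\ge 2$ be an integer and $\tau>0$. For $t\in\{0,\tau,2\tau,\dots\}$ let $u_j^t=u(j,t)$, $j=0,\dots,N$, be defined by prescribed initial values $u(j,0)$, the Dirichlet boundary condition $u_0^t=u_N^t=0$ for all $t$, and the iteration, for $j=1,\dots,N-1$, $$u_j^{t+\tau}=u_j^t+\frac{u_j^tu_{j-1}^t}{2}\bigl(u_j^t+u_{j-1}^t-1\bigr)\bigl(u_{j-1}^t-u_j^t\bigr)+\frac{u_j^tu_{j+1}^t}{2}\bigl(u_j^t+u_{j+1}^t-1\bigr)\bigl(u_{j+1}^t-u_j^t\bigr).$$ Suppose $1/2\le u(j,0)\le 1$ for $j=1,\dots,N-1$. Then for all $t\in\{0,\tau,2\tau,\dots\}$ and all $j=1,\dots,N-1$, $$\min_{1\le i\le N-1}u(i,0)\le u(j,t)\le \max_{1\le i\le N-1}u(i,0).$$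
   Context: This is an aggregation–diffusion lattice model on the grid points $x_j=j/N$ with time step $\tau$; the value $1/2$ is the density threshold $\alpha$ separating aggregation (below) and diffusion (above). *)

theory Defs
  imports Complex_Main
begin

end

theory Submission
  imports Defs
begin

lemma c_bounds:
  fixes a b :: real
  assumes "1/2 \<le> a" "a \<le> 1" "1/2 \<le> b" "b \<le> 1"
  shows "0 \<le> a * b * (a + b - 1)" "a * b * (a + b - 1) \<le> 1"
proof -
  have "0 \<le> a * b" using assms by simp
  thus "0 \<le> a * b * (a + b - 1)" using assms by simp
  have "a * b \<le> 1" using assms by (intro mult_le_one) auto
  moreover have "a + b - 1 \<le> 1" "0 \<le> a + b - 1" using assms by simp_all
  ultimately show "a * b * (a + b - 1) \<le> 1"
    using \<open>0 \<le> a * b\<close> mult_le_one by blast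
qed

lemma f_bound:
  fixes a b m M :: real
  assumes "1/2 \<le> m" "M \<le> 1" "m \<le> a" "a \<le> M" "b = 0 \<or> (m \<le> b \<and> b \<le> M)"
  shows "(m - a)/2 \<le> a * b / 2 * (a + b - 1) * (b - a)"
    and "a * b / 2 * (a + b - 1) * (b - a) \<le> (M - a)/2"
proof -
  have "(m - a)/2 \<le> a * b / 2 * (a + b - 1) * (b - a) \<and> a * b / 2 * (a + b - 1) * (b - a) \<le> (M - a)/2"
  proof (cases "b = 0")
    case True thus ?thesis using assms by simp
  next
    case False
    hence bb: "m \<le> b" "b \<le> M" using assms by auto
    define c where "c = a * b * (a + b - 1)"
    have c0: "0 \<le> c" and c1: "c \<le> 1" unfolding c_def using c_bounds[of a b] assms bb by auto
    have eq: "a * b / 2 * (a + b - 1) * (b - a) = c * (b - a) / 2" unfolding c_def by simp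
    show ?thesis
    proof (cases "a \<le> b")
      case True
      have "c * (b - a) \<le> 1 * (b - a)" using c1 True by (intro mult_right_mono) auto
      moreover have "0 \<le> c * (b - a)" using c0 True by simp
      ultimately show ?thesis unfolding eq using assms bb by (simp add: field_simps)
    next
      case False
      have "c * (a - b) \<le> 1 * (a - b)" using c1 False by (intro mult_right_mono) auto
      moreover have "0 \<le> c * (a - b)" using c0 False by simp
      moreover have "c * (b - a) = - (c * (a - b))" by (simp add: algebra_simps)
      ultimately show ?thesis unfolding eq using assms bb by (simp add: field_simps)
    qed
  qed
  thus "(m - a)/2 \<le> a * b / 2 * (a + b - 1) * (b - a)"
    and "a * b / 2 * (a + b - 1) * (b - a) \<le> (M - a)/2" by auto
qed

lemma step:
  fixes a b1 b2 m M :: real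
  assumes "1/2 \<le> m" "M \<le> 1" "m \<le> a" "a \<le> M"
    "b1 = 0 \<or> (m \<le> b1 \<and> b1 \<le> M)" "b2 = 0 \<or> (m \<le> b2 \<and> b2 \<le> M)"
  shows "m \<le> a + a * b1 / 2 * (a + b1 - 1) * (b1 - a) + a * b2 / 2 * (a + b2 - 1) * (b2 - a)
    \<and> a + a * b1 / 2 * (a + b1 - 1) * (b1 - a) + a * b2 / 2 * (a + b2 - 1) * (b2 - a) \<le> M"
proof -
  note L = f_bound[OF assms(1-4) assms(5)] and R = f_bound[OF assms(1-4) assms(6)]
  define x where "x = a * b1 / 2 * (a + b1 - 1) * (b1 - a)"
  define y where "y = a * b2 / 2 * (a + b2 - 1) * (b2 - a)"
  have "(m - a)/2 \<le> x" "x \<le> (M - a)/2" "(m - a)/2 \<le> y" "y \<le> (M - a)/2"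
    using L R unfolding x_def y_def by auto
  hence "m \<le> a + x + y \<and> a + x + y \<le> M" by (simp add: field_simps)
  thus ?thesis unfolding x_def y_def .
qed

theorem theorem3p3:
  fixes N :: nat and \<tau> :: real and u :: "real \<Rightarrow> nat \<Rightarrow> real"
  assumes "N \<ge> 2" and "\<tau> > 0"
    and bdry: "\<And>n. u (real n * \<tau>) 0 = 0 \<and> u (real n * \<tau>) N = 0"
    and iter: "\<And>n j. 1 \<le> j \<Longrightarrow> j \<le> N - 1 \<Longrightarrow>
      u (real n * \<tau> + \<tau>) j =
        u (real n * \<tau>) j
        + u (real n * \<tau>) j * u (real n * \<tau>) (j - 1) / 2
            * (u (real n * \<tau>) j + u (real n * \<tau>) (j - 1) - 1)
            * (u (real n * \<tau>) (j - 1) - u (real n * \<tau>) j)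
        + u (real n * \<tau>) j * u (real n * \<tau>) (j + 1) / 2
            * (u (real n * \<tau>) j + u (real n * \<tau>) (j + 1) - 1)
            * (u (real n * \<tau>) (j + 1) - u (real n * \<tau>) j)"
    and init: "\<And>j. 1 \<le> j \<Longrightarrow> j \<le> N - 1 \<Longrightarrow> 1/2 \<le> u 0 j \<and> u 0 j \<le> 1"
  shows "\<forall>n j. 1 \<le> j \<and> j \<le> N - 1 \<longrightarrow>
           (MIN i\<in>{1..N-1}. u 0 i) \<le> u (real n * \<tau>) j \<and>
           u (real n * \<tau>) j \<le> (MAX i\<in>{1..N-1}. u 0 i)"
proof -
  define m where "m = (MIN i\<in>{1..N-1}. u 0 i)"
  define M where "M = (MAX i\<in>{1..N-1}. u 0 i)"
  have ne: "{1..N-1} \<noteq> {}" "finite {1..N-1}" using assms(1) by auto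
  have "m \<in> u 0 ` {1..N-1}" unfolding m_def using ne by (intro Min_in) auto
  then obtain i where i: "i \<in> {1..N-1}" "m = u 0 i" by blast
  have "M \<in> u 0 ` {1..N-1}" unfolding M_def using ne by (intro Max_in) auto
  then obtain k where k: "k \<in> {1..N-1}" "M = u 0 k" by blast
  have m12: "1/2 \<le> m" using i init by auto
  have M1: "M \<le> 1" using k init by auto
  have P: "\<forall>j. 1 \<le> j \<and> j \<le> N - 1 \<longrightarrow> m \<le> u (real n * \<tau>) j \<and> u (real n * \<tau>) j \<le> M" for n
  proof (induction n)
    case 0
    show ?case unfolding m_def M_def using ne by auto
  next
    case (Suc n)
    show ?case
    proof (intro allI impI)
      fix j assume j: "1 \<le> j \<and> j \<le> N - 1"
      let ?v = "u (real n * \<tau>)"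
      have a: "m \<le> ?v j" "?v j \<le> M" using Suc j by auto
      have bl: "?v (j - 1) = 0 \<or> (m \<le> ?v (j - 1) \<and> ?v (j - 1) \<le> M)"
      proof (cases "j = 1")
        case True thus ?thesis using bdry by simp
      next
        case False
        hence "1 \<le> j - 1 \<and> j - 1 \<le> N - 1" using j by auto
        thus ?thesis using Suc by blast
      qed
      have br: "?v (j + 1) = 0 \<or> (m \<le> ?v (j + 1) \<and> ?v (j + 1) \<le> M)"
      proof (cases "j = N - 1")
        case True thus ?thesis using bdry assms(1) by simp
      next
        case False
        hence "1 \<le> j + 1 \<and> j + 1 \<le> N - 1" using j by auto
        thus ?thesis using Suc by blast
      qed
      have e: "real (Suc n) * \<tau> = real n * \<tau> + \<tau>" by (simp add: algebra_simps)
      show "m \<le> u (real (Suc n) * \<tau>) j \<and> u (real (Suc n) * \<tau>) j \<le> M"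
        unfolding e iter[OF conjunct1[OF j] conjunct2[OF j]] by (rule step[OF m12 M1 a bl br])
    qed
  qed
  thus ?thesis unfolding m_def M_def by blast
qed

end
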